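(* Let $\kappa>-1$ and let $ds^2_\kappa$ be the Jensen metric on the Stiefel variety $V(n,r)$, i.e. the Riemannian metric whose kinetic energy function on $T^*V(n,r)$ is $$T_\kappa(X,P)=\tfrac12\operatorname{tr}(P^TP)-\left(\tfrac12+\kappa\right)\operatorname{tr}((X^TP)^2).$$ Then the Legendre transformation $TV(n,r)\to T^*V(n,r)$ determined by $ds^2_\kappa$ and its inverse are given by $$P=\dot X-\frac{1+2\kappa}{2+2\kappa}\,XX^T\dot X,\qquad \dot X=P-(1+2\kappa)\,XP^TX,$$ respectively, where $(X,\dot X)$ satisfies $X^TX=\mathbf I_r$, $X^T\dot X+\dot X^TX=0$ and $(X,P)$ satisfies $X^TX=\mathbf I_r$, $X^TP+P^TX=0$.
   Context: $V(n,r)=\{X\in M_{n,r}(\mathbb R): X^TX=\mathbf I_r\}$ is the Stiefel variety. Its tangent bundle is realized as pairs $(X,\dot X)$ of $n\times r$ matrices with $X^TX=\mathbf I_r$, $X^T\dot X+\dot X^TX=0$; its cotangent bundle is realized as pairs $(X,P)$ of $n\times r$ matrices with $X^TX=\mathbf I_r$, $X^TP+P^TX=0$, covectors being paired with tangent vectors by $\operatorname{tr}(P^T\dot X)$ (the restriction of the ambient Euclidean structure of $M_{n,r}(\mathbb R)$). Equivalently, $T_\kappa=\frac12\langle\Phi,\Phi\rangle+\frac12\kappa\langle\Psi,\Psi\rangle$ with $\Phi=PX^T-XP^T$, $\Psi=X^TP-P^TX$ and $\langle\eta_1,\eta_2\rangle=-\frac12\operatorname{tr}(\eta_1\eta_2)$.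 *)

theory Defs
  imports "HOL-Analysis.Analysis"
begin

text \<open>n x r real matrices are modelled as real^'r^'n (rows indexed by 'n, columns by 'r).\<close>

definition stiefel :: "real^'r^'n \<Rightarrow> bool" where
  "stiefel X \<longleftrightarrow> transpose X ** X = mat 1"

definition tangent_vec :: "real^'r^'n \<Rightarrow> real^'r^'n \<Rightarrow> bool" where
  "tangent_vec X V \<longleftrightarrow> transpose X ** V + transpose V ** X = 0"

text \<open>Covectors at X: X^T P + P^T X = 0 (same realisation, paired by trace).\<close>
definition cotangent_vec :: "real^'r^'n \<Rightarrow> real^'r^'n \<Rightarrow> bool" where
  "cotangent_vec X P \<longleftrightarrow> transpose X ** P + transpose P ** X = 0"

definition pairing :: "real^'r^'n \<Rightarrow> real^'r^'n \<Rightarrow> real" where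
  "pairing P V = trace (transpose P ** V)"

definition T_kappa :: "real \<Rightarrow> real^'r^'n \<Rightarrow> real^'r^'n \<Rightarrow> real" where
  "T_kappa \<kappa> X P = 1/2 * trace (transpose P ** P)
      - (1/2 + \<kappa>) * trace ((transpose X ** P) ** (transpose X ** P))"

text \<open>Inverse Legendre transformation: the tangent vector V is the fibre derivative of
  T_kappa at the covector P, i.e. dT(P)[Q] = <Q, V> for all covectors Q at X.\<close>
definition inv_legendre_rel :: "real \<Rightarrow> real^'r^'n \<Rightarrow> real^'r^'n \<Rightarrow> real^'r^'n \<Rightarrow> bool" where
  "inv_legendre_rel \<kappa> X P V \<longleftrightarrow> cotangent_vec X P \<and> tangent_vec X V \<and>
     (\<forall>Q. cotangent_vec X Q \<longrightarrow>
        ((\<lambda>t. T_kappa \<kappa> X (P + t *\<^sub>R Q)) has_real_derivative pairing Q V) (at 0))"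

definition legendre_rel :: "real \<Rightarrow> real^'r^'n \<Rightarrow> real^'r^'n \<Rightarrow> real^'r^'n \<Rightarrow> bool" where
  "legendre_rel \<kappa> X V P \<longleftrightarrow> inv_legendre_rel \<kappa> X P V"

end

theory Submission
  imports Defs
begin

lemma tr_add: "transpose (A + B) = transpose A + transpose (B::real^'a^'b)"
  by (vector transpose_def)
lemma tr_diff: "transpose (A - B) = transpose A - transpose (B::real^'a^'b)"
  by (vector transpose_def)
lemma tr_zero: "transpose (0::real^'a^'b) = 0"
  by (vector transpose_def)
lemma mm_rdistrib: "((A::real^'a^'b) + B) ** C = A ** C + B ** C"
  by (vector matrix_matrix_mult_def sum.distrib[symmetric] field_simps)
lemma mm_ldiff: "(A::real^'a^'b) ** (B - C) = A ** B - A ** C"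
  by (vector matrix_matrix_mult_def sum_subtractf[symmetric] field_simps)
lemma mm_rdiff: "((A::real^'a^'b) - B) ** C = A ** C - B ** C"
  by (vector matrix_matrix_mult_def sum_subtractf[symmetric] field_simps)
lemma mm_neg: "(A::real^'a^'b) ** (- C) = - (A ** C)"
  by (vector matrix_matrix_mult_def sum_negf[symmetric])
lemma mm_sl: "(k *\<^sub>R (A::real^'a^'b)) ** C = k *\<^sub>R (A ** C)"
  by (simp add: scalar_matrix_assoc)
lemma mm_sr: "(A::real^'a^'b) ** (k *\<^sub>R C) = k *\<^sub>R (A ** C)"
  by (simp add: matrix_scalar_ac scalar_matrix_assoc)
lemma trace_scaleR: "trace (k *\<^sub>R (A::real^'a^'a)) = k * trace A"
  by (simp add: trace_def sum_distrib_left)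
lemma trace_transp: "trace (transpose (A::real^'a^'a)) = trace A"
  by (simp add: trace_def transpose_def)
lemma trace_tt: "trace (transpose A ** (A::real^'a^'b)) = (\<Sum>i\<in>UNIV. \<Sum>k\<in>UNIV. (A$k$i)^2)"
  by (simp add: trace_def matrix_matrix_mult_def transpose_def power2_eq_square)
lemma trace_tt_zero: assumes "trace (transpose A ** (A::real^'a^'b)) = 0" shows "A = 0"
proof -
  have "\<forall>i\<in>UNIV. (\<Sum>k\<in>UNIV. (A$k$i)^2) = 0"
    using assms unfolding trace_tt
    by (subst sum_nonneg_eq_0_iff[symmetric]) (auto intro: sum_nonneg)
  then have "\<forall>i k. (A$k$i)^2 = 0"
    by (simp add: sum_nonneg_eq_0_iff)
  then show ?thesis by (simp add: vec_eq_iff)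
qed

lemma expand_sq: "((A::real^'a^'a) + t *\<^sub>R B) ** (A + t *\<^sub>R B) = A ** A + t *\<^sub>R (A ** B + B ** A) + t^2 *\<^sub>R (B ** B)"
  by (simp add: matrix_add_ldistrib mm_rdistrib mm_sl mm_sr scaleR_add_right power2_eq_square algebra_simps)
lemma expand_tt: "transpose ((A::real^'a^'b) + t *\<^sub>R B) ** (A + t *\<^sub>R B) = transpose A ** A + t *\<^sub>R (transpose A ** B + transpose B ** A) + t^2 *\<^sub>R (transpose B ** B)"
  by (simp add: tr_add transpose_scalar matrix_add_ldistrib mm_rdistrib mm_sl mm_sr scaleR_add_right power2_eq_square algebra_simps)

lemma T_expand: "T_kappa \<kappa> X (P + t *\<^sub>R Q) = T_kappa \<kappa> X P
   + t * (1/2 * (trace (transpose P ** Q) + trace (transpose Q ** P))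
       - (1/2 + \<kappa>) * (trace ((transpose X ** P) ** (transpose X ** Q)) + trace ((transpose X ** Q) ** (transpose X ** P))))
   + t^2 * (1/2 * trace (transpose Q ** Q) - (1/2 + \<kappa>) * trace ((transpose X ** Q) ** (transpose X ** Q)))"
proof -
  have "transpose X ** (P + t *\<^sub>R Q) = transpose X ** P + t *\<^sub>R (transpose X ** Q)"
    by (simp add: matrix_add_ldistrib mm_sr)
  then show ?thesis
    unfolding T_kappa_def
    by (simp add: expand_sq expand_tt trace_add trace_scaleR algebra_simps)
qed

definition DT :: "real \<Rightarrow> real^'r^'n \<Rightarrow> real^'r^'n \<Rightarrow> real^'r^'n \<Rightarrow> real" where
  "DT \<kappa> X P Q = trace (transpose Q ** P) - (1 + 2*\<kappa>) * trace ((transpose X ** Q) ** (transpose X ** P))"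

lemma T_deriv: "((\<lambda>t. T_kappa \<kappa> X (P + t *\<^sub>R Q)) has_real_derivative DT \<kappa> X P Q) (at 0)"
proof -
  have e1: "trace (transpose P ** Q) = trace (transpose Q ** P)"
    by (metis trace_transp matrix_transpose_mul transpose_transpose)
  have e2: "trace ((transpose X ** P) ** (transpose X ** Q)) = trace ((transpose X ** Q) ** (transpose X ** P))"
    by (rule trace_mul_sym)
  define L where "L = (1/2 * (trace (transpose P ** Q) + trace (transpose Q ** P))
       - (1/2 + \<kappa>) * (trace ((transpose X ** P) ** (transpose X ** Q)) + trace ((transpose X ** Q) ** (transpose X ** P))))"
  define E where "E = (1/2 * trace (transpose Q ** Q) - (1/2 + \<kappa>) * trace ((transpose X ** Q) ** (transpose X ** Q)))"
  have L: "L = DT \<kappa> X P Q" unfolding L_def DT_def e1 e2 by (simp add: algebra_simps)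
  have "((\<lambda>t. T_kappa \<kappa> X P + t * L + t^2 * E) has_real_derivative L) (at 0)"
    by (auto intro!: derivative_eq_intros)
  then show ?thesis unfolding T_expand L_def[symmetric] E_def[symmetric] L .
qed

lemma key_trace: fixes X P Q :: "real^'r^'n" shows "trace ((transpose X ** Q) ** (transpose X ** P)) = trace (transpose Q ** (X ** transpose P ** X))"
proof -
  have "trace ((transpose X ** Q) ** (transpose X ** P)) = trace (transpose ((transpose X ** Q) ** (transpose X ** P)))"
    by (rule trace_transp[symmetric])
  also have "\<dots> = trace ((transpose P ** X) ** (transpose Q ** X))"
    by (simp add: matrix_transpose_mul)
  also have "\<dots> = trace ((transpose Q ** X) ** (transpose P ** X))"
    by (rule trace_mul_sym)
  also have "\<dots> = trace (transpose Q ** (X ** transpose P ** X))"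
    by (simp add: matrix_mul_assoc)
  finally show ?thesis .
qed

lemma part2:
  fixes X P V :: "real^'r^'n"
  assumes st: "stiefel X" and cP: "cotangent_vec X P"
  shows "inv_legendre_rel \<kappa> X P V \<longleftrightarrow> V = P - (1 + 2*\<kappa>) *\<^sub>R (X ** transpose P ** X)"
proof -
  define V0 where "V0 = P - (1 + 2*\<kappa>) *\<^sub>R (X ** transpose P ** X)"
  have XX: "transpose X ** X = mat 1" using st by (simp add: stiefel_def)
  have sk: "transpose X ** P + transpose P ** X = 0" using cP by (simp add: cotangent_vec_def)
  have D0: "DT \<kappa> X P Q = pairing Q V0" for Q
    unfolding DT_def pairing_def V0_def key_trace
    by (simp add: mm_ldiff mm_sr trace_sub trace_scaleR)
  have tV0: "tangent_vec X V0"
  proof -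
    have a: "transpose X ** V0 = transpose X ** P - (1 + 2*\<kappa>) *\<^sub>R (transpose P ** X)"
      unfolding V0_def by (simp add: mm_ldiff mm_sr matrix_mul_assoc XX)
    have b: "transpose V0 ** X = transpose P ** X - (1 + 2*\<kappa>) *\<^sub>R (transpose X ** P)"
      unfolding V0_def
      by (simp add: tr_diff transpose_scalar matrix_transpose_mul mm_rdiff mm_sl matrix_mul_assoc[symmetric] XX)
    have "transpose X ** V0 + transpose V0 ** X = (1 - (1 + 2*\<kappa>)) *\<^sub>R (transpose X ** P + transpose P ** X)"
      unfolding a b by (simp add: algebra_simps)
    then show ?thesis unfolding tangent_vec_def sk by simp
  qed
  show ?thesis
  proof
    assume H: "inv_legendre_rel \<kappa> X P V"
    then have tV: "tangent_vec X V" and dV: "\<And>Q. cotangent_vec X Q \<Longrightarrow>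
        ((\<lambda>t. T_kappa \<kappa> X (P + t *\<^sub>R Q)) has_real_derivative pairing Q V) (at 0)"
      unfolding inv_legendre_rel_def by auto
    define W where "W = V - V0"
    have tW: "cotangent_vec X W"
    proof -
      have "transpose X ** W + transpose W ** X = (transpose X ** V + transpose V ** X) - (transpose X ** V0 + transpose V0 ** X)"
        unfolding W_def by (simp add: mm_ldiff tr_diff mm_rdiff algebra_simps)
      then show ?thesis using tV tV0 unfolding tangent_vec_def cotangent_vec_def by simp
    qed
    have "pairing W V = DT \<kappa> X P W"
      using DERIV_unique[OF dV[OF tW] T_deriv] .
    then have "pairing W V = pairing W V0" using D0 by simp
    then have "trace (transpose W ** W) = 0"
      unfolding pairing_def W_def by (simp add: mm_ldiff trace_sub)
    then have "W = 0" by (rule trace_tt_zero)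
    then show "V = P - (1 + 2*\<kappa>) *\<^sub>R (X ** transpose P ** X)" unfolding W_def V0_def by simp
  next
    assume "V = P - (1 + 2*\<kappa>) *\<^sub>R (X ** transpose P ** X)"
    then have V: "V = V0" unfolding V0_def .
    show "inv_legendre_rel \<kappa> X P V"
      unfolding inv_legendre_rel_def V using cP tV0 T_deriv D0 by metis
  qed
qed

lemma part1:
  fixes X P V :: "real^'r^'n"
  assumes k: "\<kappa> > -1" and st: "stiefel X" and tV: "tangent_vec X V"
  shows "legendre_rel \<kappa> X V P \<longleftrightarrow> P = V - ((1 + 2*\<kappa>) / (2 + 2*\<kappa>)) *\<^sub>R (X ** transpose X ** V)"
proof -
  define b where "b = 1 + 2*\<kappa>"
  define a where "a = (1 + 2*\<kappa>) / (2 + 2*\<kappa>)"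
  have ab: "a * (1 + b) = b" using k unfolding a_def b_def by (simp add: field_simps)
  have ab2: "b * (1 - a) = a" using k unfolding a_def b_def by (simp add: field_simps)
  have XX: "transpose X ** X = mat 1" using st by (simp add: stiefel_def)
  have skV: "transpose X ** V + transpose V ** X = 0" using tV by (simp add: tangent_vec_def)
  show ?thesis unfolding legendre_rel_def a_def[symmetric]
  proof
    assume H: "inv_legendre_rel \<kappa> X P V"
    then have cP: "cotangent_vec X P" unfolding inv_legendre_rel_def by simp
    have V: "V = P - b *\<^sub>R (X ** transpose P ** X)" using part2[OF st cP] H b_def by simp
    have sk: "transpose P ** X = - (transpose X ** P)" using cP
      by (simp add: cotangent_vec_def eq_neg_iff_add_eq_0 add.commute)
    define Y where "Y = X ** (transpose X ** P)"
    have Y1: "X ** transpose P ** X = - Y"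
      unfolding Y_def by (simp add: matrix_mul_assoc[symmetric] sk mm_neg)
    have V2: "V = P + b *\<^sub>R Y" using V Y1 by simp
    have XXY: "X ** transpose X ** Y = Y"
    proof -
      have "X ** transpose X ** Y = X ** (transpose X ** X) ** (transpose X ** P)"
        unfolding Y_def by (simp only: matrix_mul_assoc)
      then show ?thesis unfolding XX Y_def by simp
    qed
    have Y2: "X ** transpose X ** V = (1 + b) *\<^sub>R Y"
      unfolding V2 
      by (simp add: matrix_add_ldistrib mm_sr XXY) (simp add: Y_def matrix_mul_assoc algebra_simps)
    show "P = V - a *\<^sub>R (X ** transpose X ** V)"
      unfolding Y2 unfolding V2 using ab by (simp add: algebra_simps scaleR_add_left[symmetric])
  next
    assume P: "P = V - a *\<^sub>R (X ** transpose X ** V)"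
    have a1: "transpose X ** P = (1 - a) *\<^sub>R (transpose X ** V)"
      unfolding P by (simp add: mm_ldiff mm_sr matrix_mul_assoc XX algebra_simps)
    have a2: "transpose P ** X = (1 - a) *\<^sub>R (transpose V ** X)"
      unfolding P by (simp add: tr_diff transpose_scalar matrix_transpose_mul mm_rdiff mm_sl
          matrix_mul_assoc[symmetric] XX algebra_simps)
    have cP: "cotangent_vec X P"
    proof -
      have "transpose X ** P + transpose P ** X = (1 - a) *\<^sub>R (transpose X ** V + transpose V ** X)"
        unfolding a1 a2 by (simp add: algebra_simps)
      then show ?thesis unfolding cotangent_vec_def skV by simp
    qed
    have skV': "transpose V ** X = - (transpose X ** V)" using skV
      by (simp add: eq_neg_iff_add_eq_0 add.commute)
    define Z where "Z = X ** transpose X ** V"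
    have Z1: "X ** transpose P ** X = - ((1 - a) *\<^sub>R Z)"
      unfolding Z_def by (simp add: matrix_mul_assoc[symmetric] a2 skV' mm_sr mm_neg)
    have e: "b *\<^sub>R ((1 - a) *\<^sub>R Z) = a *\<^sub>R Z" using ab2 by simp
    have "P - b *\<^sub>R (X ** transpose P ** X) = P + a *\<^sub>R Z"
      unfolding Z1 scaleR_minus_right e by simp
    then have "V = P - b *\<^sub>R (X ** transpose P ** X)"
      using P unfolding Z_def[symmetric] by simp
    then show "inv_legendre_rel \<kappa> X P V" using part2[OF st cP] b_def by simp
  qed
qed

theorem lemma1:
  fixes \<kappa> :: real and X :: "real^'r^'n"
  assumes "\<kappa> > -1" and "stiefel X"
  shows "(\<forall>V. tangent_vec X V \<longrightarrow>
            (\<forall>P. legendre_rel \<kappa> X V P \<longleftrightarrow>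
                 P = V - ((1 + 2*\<kappa>) / (2 + 2*\<kappa>)) *\<^sub>R (X ** transpose X ** V)))
       \<and> (\<forall>P. cotangent_vec X P \<longrightarrow>
            (\<forall>V. inv_legendre_rel \<kappa> X P V \<longleftrightarrow>
                 V = P - (1 + 2*\<kappa>) *\<^sub>R (X ** transpose P ** X)))"
  using part1[OF assms] part2[OF assms(2)] by blast

end
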